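(* Let $A$ be a non-negative $d\times d$ matrix and let $\Pi$ be a permutation matrix such that $\widetilde A=\Pi A\Pi^T$ is block upper triangular, with square diagonal blocks $\widetilde A_{1,1},\dots,\widetilde A_{m,m}$, blocks $\widetilde A_{i,j}$ for $i<j$ above the diagonal, and zero blocks below the diagonal. For each $i=1,\dots,m$, let $\widetilde X^{(i)}$ be a closest stable non-negative matrix to $\widetilde A_{i,i}$. In particular, $\widetilde X^{(i)}=\widetilde A_{i,i}$ if $\rho(\widetilde A_{i,i})\le1$. Let $\widetilde X$ be the block upper triangular matrix with diagonal blocks $\widetilde X^{(i)}$, blocks $\widetilde A_{i,j}$ above the diagonal ($i<j$), and zero blocks below the diagonal. Then $X=\Pi^T\widetilde X\Pi$ is a closest stable non-negative matrix to $A$.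
   Context: $\rho(\cdot)$ denotes spectral radius and $\|\cdot\|$ the Frobenius norm $\|X\|=\sqrt{\sum_{i,j}x_{ij}^2}$. A square matrix $X$ is called stable if $\rho(X)\le 1$. A closest stable non-negative matrix to a square matrix $B$ is a global minimizer of $\|X-B\|$ over all entrywise non-negative $X$ of the same size with $\rho(X)\le 1$. *)

theory Defs
  imports "Jordan_Normal_Form.Spectral_Radius"
begin

definition nonneg_mat :: "real mat \<Rightarrow> bool" where
  "nonneg_mat X \<longleftrightarrow> (\<forall>i<dim_row X. \<forall>j<dim_col X. X $$ (i,j) \<ge> 0)"

definition rho :: "real mat \<Rightarrow> real" where
  "rho X = spectral_radius (map_mat complex_of_real X)"

definition frob_norm :: "real mat \<Rightarrow> real" where
  "frob_norm X = sqrt (\<Sum>i<dim_row X. \<Sum>j<dim_col X. (X $$ (i,j))\<^sup>2)"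

definition stable :: "real mat \<Rightarrow> bool" where
  "stable X \<longleftrightarrow> rho X \<le> 1"

definition closest_stable_nonneg :: "real mat \<Rightarrow> real mat \<Rightarrow> bool" where
  "closest_stable_nonneg X B \<longleftrightarrow>
     X \<in> carrier_mat (dim_row B) (dim_row B) \<and> nonneg_mat X \<and> stable X \<and>
     (\<forall>Y \<in> carrier_mat (dim_row B) (dim_row B). nonneg_mat Y \<and> stable Y \<longrightarrow>
        frob_norm (X - B) \<le> frob_norm (Y - B))"

definition permutation_mat :: "nat \<Rightarrow> real mat \<Rightarrow> bool" where
  "permutation_mat d P \<longleftrightarrow> P \<in> carrier_mat d d \<and>
     (\<forall>i<d. \<forall>j<d. P $$ (i,j) = 0 \<or> P $$ (i,j) = 1) \<and>
     (\<forall>i<d. \<exists>!j. j < d \<and> P $$ (i,j) = 1) \<and>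
     (\<forall>j<d. \<exists>!i. i < d \<and> P $$ (i,j) = 1)"

text \<open>Block (k,l) of M for the block partition with offsets n 0 < n 1 < ... < n m:
  rows n k ..< n (k+1), columns n l ..< n (l+1).\<close>
definition block :: "(nat \<Rightarrow> nat) \<Rightarrow> real mat \<Rightarrow> nat \<Rightarrow> nat \<Rightarrow> real mat" where
  "block n M k l = mat (n (Suc k) - n k) (n (Suc l) - n l) (\<lambda>(i,j). M $$ (n k + i, n l + j))"

end

theory Submission imports Defs "HOL-Real_Asymp.Real_Asymp" begin


lemma eigvec_entry:
  fixes M :: "real mat"
  assumes M: "M \<in> carrier_mat k k"
  shows "eigenvector (map_mat complex_of_real M) v l \<longleftrightarrow>
    (v \<in> carrier_vec k \<and> v \<noteq> 0\<^sub>v k \<and> (\<forall>i<k. (\<Sum>j<k. complex_of_real (M$$(i,j)) * v$j) = l * v$i))"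
proof -
  have "v \<in> carrier_vec k \<Longrightarrow> (map_mat complex_of_real M *\<^sub>v v = l \<cdot>\<^sub>v v) \<longleftrightarrow>
      (\<forall>i<k. (\<Sum>j<k. complex_of_real (M$$(i,j)) * v$j) = l * v$i)"
    using M by (auto simp: vec_eq_iff scalar_prod_def atLeast0LessThan)
  then show ?thesis using M unfolding eigenvector_def by auto
qed

lemma rho_le_1_iff:
  fixes M :: "real mat"
  assumes M: "M \<in> carrier_mat k k" and k: "k > 0"
  shows "rho M \<le> 1 \<longleftrightarrow> (\<forall>l v. v \<in> carrier_vec k \<longrightarrow> v \<noteq> 0\<^sub>v k \<longrightarrow>
     (\<forall>i<k. (\<Sum>j<k. complex_of_real (M$$(i,j)) * v$j) = l * v$i) \<longrightarrow> cmod l \<le> 1)"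
proof -
  define CM where "CM = map_mat complex_of_real M"
  have CM: "CM \<in> carrier_mat k k" using M unfolding CM_def by auto
  have ev: "eigenvalue CM l \<longleftrightarrow> (\<exists>v. v \<in> carrier_vec k \<and> v \<noteq> 0\<^sub>v k \<and> (\<forall>i<k. (\<Sum>j<k. complex_of_real (M$$(i,j)) * v$j) = l * v$i))" for l
    unfolding eigenvalue_def CM_def eigvec_entry[OF M] by auto
  show ?thesis
  proof
    assume "rho M \<le> 1"
    then have sr: "spectral_radius CM \<le> 1" unfolding rho_def CM_def .
    show "\<forall>l v. v \<in> carrier_vec k \<longrightarrow> v \<noteq> 0\<^sub>v k \<longrightarrow>
     (\<forall>i<k. (\<Sum>j<k. complex_of_real (M$$(i,j)) * v$j) = l * v$i) \<longrightarrow> cmod l \<le> 1"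
    proof (intro allI impI)
      fix l v assume "v \<in> carrier_vec k" "v \<noteq> 0\<^sub>v k" "\<forall>i<k. (\<Sum>j<k. complex_of_real (M$$(i,j)) * v$j) = l * v$i"
      then have "l \<in> spectrum CM" unfolding spectrum_def using ev by auto
      then have "cmod l \<le> spectral_radius CM" using spectral_radius_mem_max(2)[OF CM k] by auto
      then show "cmod l \<le> 1" using sr by auto
    qed
  next
    assume H: "\<forall>l v. v \<in> carrier_vec k \<longrightarrow> v \<noteq> 0\<^sub>v k \<longrightarrow>
     (\<forall>i<k. (\<Sum>j<k. complex_of_real (M$$(i,j)) * v$j) = l * v$i) \<longrightarrow> cmod l \<le> 1"
    from spectral_radius_mem_max(1)[OF CM k] obtain l where l: "l \<in> spectrum CM" "spectral_radius CM = cmod l" by auto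
    then show "rho M \<le> 1" using H ev[of l] unfolding rho_def CM_def[symmetric] spectrum_def by auto
  qed
qed



lemma mv_entry:
  fixes M :: "'a::comm_ring_1 mat"
  assumes "M \<in> carrier_mat d d" "z \<in> carrier_vec d" "i < d"
  shows "(M *\<^sub>v z)$i = (\<Sum>j<d. M$$(i,j) * z$j)"
  using assms by (auto simp: scalar_prod_def atLeast0LessThan)

lemma mm_entry:
  fixes M :: "'a::comm_ring_1 mat"
  assumes "M \<in> carrier_mat d d" "N \<in> carrier_mat d d" "i < d" "j < d"
  shows "(M * N)$$(i,j) = (\<Sum>l<d. M$$(i,l) * N$$(l,j))"
  using assms by (auto simp: scalar_prod_def atLeast0LessThan)

lemma growth_contra:
  fixes Y :: "real mat" and z :: "real vec"
  assumes Y: "Y \<in> carrier_mat d d" and nn: "nonneg_mat Y" and sr: "rho Y \<le> 1"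
    and z: "z \<in> carrier_vec d" and zn: "\<forall>i<d. z$i \<ge> 0" and a: "a < d" "z$a > 0"
    and r: "r > 1" and ge: "\<forall>i<d. (Y *\<^sub>v z)$i \<ge> r * z$i"
  shows False
proof -
  have Yn: "\<forall>i<d. \<forall>j<d. Y$$(i,j) \<ge> 0" using nn Y unfolding nonneg_mat_def by auto
  have Yk: "Y ^\<^sub>m k \<in> carrier_mat d d" for k using Y by auto
  have pow_nn: "\<forall>i<d. \<forall>j<d. (Y ^\<^sub>m k)$$(i,j) \<ge> 0" for k
  proof (induction k)
    case 0 then show ?case using Y by auto
  next
    case (Suc k)
    show ?case
    proof (intro allI impI)
      fix i j assume ij: "i < d" "j < d"
      have "(Y ^\<^sub>m Suc k)$$(i,j) = (\<Sum>l<d. (Y ^\<^sub>m k)$$(i,l) * Y$$(l,j))"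
        using mm_entry[OF Yk Y ij] by simp
      also have "\<dots> \<ge> 0" using Suc.IH Yn ij by (intro sum_nonneg) auto
      finally show "(Y ^\<^sub>m Suc k)$$(i,j) \<ge> 0" .
    qed
  qed
  have pow_ge: "\<forall>i<d. (Y ^\<^sub>m k *\<^sub>v z)$i \<ge> r^k * z$i" for k
  proof (induction k)
    case 0 then show ?case using z Y by auto
  next
    case (Suc k)
    show ?case
    proof (intro allI impI)
      fix i assume i: "i < d"
      have "(Y ^\<^sub>m Suc k *\<^sub>v z) = Y ^\<^sub>m k *\<^sub>v (Y *\<^sub>v z)"
        using assoc_mult_mat_vec[OF Yk Y z] by simp
      also have "\<dots> $ i = (\<Sum>j<d. (Y ^\<^sub>m k)$$(i,j) * (Y *\<^sub>v z)$j)"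
        using mv_entry[OF Yk _ i, of "Y *\<^sub>v z"] Y z by simp
      also have "\<dots> \<ge> (\<Sum>j<d. (Y ^\<^sub>m k)$$(i,j) * (r * z$j))"
        using pow_nn ge i by (intro sum_mono mult_left_mono) auto
      also have "(\<Sum>j<d. (Y ^\<^sub>m k)$$(i,j) * (r * z$j)) = r * (Y ^\<^sub>m k *\<^sub>v z)$i"
        using mv_entry[OF Yk z i] by (simp add: sum_distrib_left algebra_simps)
      also have "r * (Y ^\<^sub>m k *\<^sub>v z)$i \<ge> r * (r^k * z$i)"
        using Suc.IH i r by auto
      finally show "(Y ^\<^sub>m Suc k *\<^sub>v z)$i \<ge> r^(Suc k) * z$i" by simp
    qed
  qed
  define CM where "CM = map_mat complex_of_real Y"
  have CM: "CM \<in> carrier_mat d d" using Y unfolding CM_def by auto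
  have "spectral_radius CM \<le> 1" using sr unfolding rho_def CM_def .
  from spectral_radius_jnf_norm_bound_le_1_upper_triangular[OF CM this]
  obtain c1 c2 where nb: "\<And>k. norm_bound (CM ^\<^sub>m k) (c1 + c2 * real k ^ (d - 1))" by auto
  define B where "B k = c1 + c2 * real k ^ (d - 1)" for k
  have CMk: "CM ^\<^sub>m k = map_mat complex_of_real (Y ^\<^sub>m k)" for k
    using of_real_hom.mat_hom_pow[OF Y, of k] unfolding CM_def by metis
  have bnd: "\<bar>(Y ^\<^sub>m k)$$(i,j)\<bar> \<le> B k" if "i < d" "j < d" for i j k
    using nb[of k] that Yk[of k] Y unfolding norm_bound_def CMk B_def by auto
  define S where "S = (\<Sum>j<d. z$j)"
  have "z$a \<le> S" unfolding S_def using a zn by (intro member_le_sum) auto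
  then have S: "S > 0" using a by auto
  have key: "r^k * z$a \<le> B k * S" for k
  proof -
    have "r^k * z$a \<le> (\<Sum>j<d. (Y ^\<^sub>m k)$$(a,j) * z$j)"
      using pow_ge[of k] a mv_entry[OF Yk z a(1)] by auto
    also have "\<dots> \<le> (\<Sum>j<d. B k * z$j)"
      using bnd a zn by (intro sum_mono mult_right_mono) (auto simp: abs_le_iff)
    finally show ?thesis unfolding S_def by (simp add: sum_distrib_left)
  qed
  have lim: "(\<lambda>k. B k / r ^ k) \<longlonglongrightarrow> 0" unfolding B_def using r by real_asymp
  have "z$a / S > 0" using S a by auto
  from order_tendstoD(2)[OF lim this] obtain k where "B k / r^k < z$a / S"
    unfolding eventually_sequentially by blast
  then have "B k * S < z$a * r^k" using S r by (simp add: field_simps)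
  with key[of k] show False by (simp add: algebra_simps)
qed



lemma perm_fun:
  assumes "permutation_mat d P"
  obtains \<sigma> where "bij_betw \<sigma> {..<d} {..<d}" "\<forall>i<d. \<forall>j<d. P$$(i,j) = (if j = \<sigma> i then 1 else 0)"
proof -
  from assms have P01: "\<forall>i<d. \<forall>j<d. P $$ (i,j) = 0 \<or> P $$ (i,j) = 1"
    and R: "\<forall>i<d. \<exists>!j. j < d \<and> P $$ (i,j) = 1" and C: "\<forall>j<d. \<exists>!i. i < d \<and> P $$ (i,j) = 1"
    unfolding permutation_mat_def by auto
  define \<sigma> where "\<sigma> i = (THE j. j < d \<and> P $$ (i,j) = 1)" for i
  have s: "\<sigma> i < d \<and> P $$ (i, \<sigma> i) = 1" if "i < d" for i
    unfolding \<sigma>_def using theI'[OF R[rule_format, OF that]] .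
  have ent: "\<forall>i<d. \<forall>j<d. P$$(i,j) = (if j = \<sigma> i then 1 else 0)"
  proof (intro allI impI)
    fix i j assume ij: "i < d" "j < d"
    show "P$$(i,j) = (if j = \<sigma> i then 1 else 0)"
    proof (cases "j = \<sigma> i")
      case True then show ?thesis using s ij by auto
    next
      case False
      have "P $$ (i,j) \<noteq> 1" using R ij s[OF ij(1)] False by blast
      then show ?thesis using P01 ij False by auto
    qed
  qed
  have inj: "inj_on \<sigma> {..<d}"
  proof (rule inj_onI)
    fix i i' assume "i \<in> {..<d}" "i' \<in> {..<d}" "\<sigma> i = \<sigma> i'"
    then show "i = i'" using C s by (metis lessThan_iff)
  qed
  have img: "\<sigma> ` {..<d} = {..<d}"
  proof
    show "\<sigma> ` {..<d} \<subseteq> {..<d}" using s by auto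
    show "{..<d} \<subseteq> \<sigma> ` {..<d}"
    proof
      fix j assume j: "j \<in> {..<d}"
      then obtain i where i: "i < d" "P $$ (i,j) = 1" using C by auto
      then have "j = \<sigma> i" using ent j by (auto split: if_splits)
      then show "j \<in> \<sigma> ` {..<d}" using i by auto
    qed
  qed
  show ?thesis using that[of \<sigma>] inj img ent unfolding bij_betw_def by auto
qed

lemma sel_sum:
  fixes d c :: nat
  assumes "\<forall>k<d. p k = (if k = c then 1 else 0)" "c < d"
  shows "(\<Sum>k<d. p k * (f k :: 'a::comm_ring_1)) = f c"
proof -
  have "(\<Sum>k<d. p k * f k) = (\<Sum>k<d. if k = c then f k else 0)"
    using assms(1) by (intro sum.cong) auto
  also have "\<dots> = f c" using assms(2) by (subst sum.delta) auto
  finally show ?thesis .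
qed

lemma perm_conj:
  fixes P M :: "real mat"
  assumes P: "P \<in> carrier_mat d d" and Pe: "\<forall>i<d. \<forall>j<d. P$$(i,j) = (if j = \<sigma> i then 1 else 0)"
    and sd: "\<forall>i<d. \<sigma> i < d" and M: "M \<in> carrier_mat d d" and ij: "i < d" "j < d"
  shows "(P * M * transpose_mat P)$$(i,j) = M$$(\<sigma> i, \<sigma> j)"
proof -
  have PM: "(P * M)$$(i,l) = M$$(\<sigma> i, l)" if "l < d" for l
  proof -
    have "(P * M)$$(i,l) = (\<Sum>k<d. P$$(i,k) * M$$(k,l))"
      using P M ij that by (auto simp: scalar_prod_def atLeast0LessThan)
    also have "\<dots> = M$$(\<sigma> i, l)" using Pe ij sd by (intro sel_sum) auto
    finally show ?thesis .
  qed
  have "(P * M * transpose_mat P)$$(i,j) = (\<Sum>l<d. (P * M)$$(i,l) * transpose_mat P$$(l,j))"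
    using P M ij by (intro mm_entry) auto
  also have "\<dots> = (\<Sum>l<d. (P * M)$$(i,l) * P$$(j,l))"
    using P ij by (intro sum.cong) auto
  also have "\<dots> = (\<Sum>l<d. P$$(j,l) * M$$(\<sigma> i, l))"
    using PM by (intro sum.cong) auto
  also have "\<dots> = M$$(\<sigma> i, \<sigma> j)" using Pe ij sd by (intro sel_sum) auto
  finally show ?thesis .
qed

lemma perm_conj_T:
  fixes P M :: "real mat"
  assumes P: "P \<in> carrier_mat d d" and Pe: "\<forall>i<d. \<forall>j<d. P$$(i,j) = (if j = \<sigma> i then 1 else 0)"
    and b: "bij_betw \<sigma> {..<d} {..<d}" and M: "M \<in> carrier_mat d d" and ij: "i < d" "j < d"
  shows "(transpose_mat P * M * P)$$(i,j) = M$$(inv_into {..<d} \<sigma> i, inv_into {..<d} \<sigma> j)"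
proof -
  let ?t = "inv_into {..<d} \<sigma>"
  have bt: "bij_betw ?t {..<d} {..<d}" using bij_betw_inv_into[OF b] .
  have sd: "\<forall>i<d. ?t i < d" using bt bij_betwE by blast
  have Te: "\<forall>i<d. \<forall>j<d. transpose_mat P $$(i,j) = (if j = ?t i then 1 else 0)"
  proof (intro allI impI)
    fix i j assume ij: "i < d" "j < d"
    have "(i = \<sigma> j) = (j = ?t i)"
      using b ij by (metis bij_betw_inv_into_left bij_betw_inv_into_right lessThan_iff)
    then show "transpose_mat P $$(i,j) = (if j = ?t i then 1 else 0)" using Pe P ij by auto
  qed
  have "(transpose_mat P * M * transpose_mat (transpose_mat P))$$(i,j) = M$$(?t i, ?t j)"
    using perm_conj[OF _ Te sd M ij] P by auto
  then show ?thesis by simp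
qed

lemma n_mono_le:
  fixes n :: "nat \<Rightarrow> nat"
  assumes "\<forall>k<m. n k < n (Suc k)" "k \<le> l" "l \<le> m"
  shows "n k \<le> (n l :: nat)"
  using assms(2,3)
proof (induction l)
  case 0 then show ?case by auto
next
  case (Suc l)
  show ?case
  proof (cases "k = Suc l")
    case False
    then have "n k \<le> n l" using Suc by auto
    moreover have "n l < n (Suc l)" using assms(1) Suc by auto
    ultimately show ?thesis by auto
  qed auto
qed

lemma n_block_exists:
  fixes n :: "nat \<Rightarrow> nat"
  assumes mono: "\<forall>k<m. n k < n (Suc k)" and n0: "n 0 = 0" and nm: "n m = d" and j: "j < d"
  shows "\<exists>k<m. n k \<le> j \<and> j < n (Suc k)"
proof -
  define S where "S = {k. k \<le> m \<and> n k \<le> j}"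
  have fin: "finite S" unfolding S_def by auto
  have ne: "0 \<in> S" unfolding S_def using n0 by auto
  define k where "k = Max S"
  have kS: "k \<in> S" unfolding k_def using fin ne by (intro Max_in) auto
  have km: "k < m" using kS j nm unfolding S_def by (cases "k = m") auto
  have "j < n (Suc k)"
  proof (rule ccontr)
    assume "\<not> j < n (Suc k)"
    then have "Suc k \<in> S" using km unfolding S_def by auto
    then have "Suc k \<le> k" unfolding k_def using fin by (intro Max_ge) auto
    then show False by auto
  qed
  then show ?thesis using km kS unfolding S_def by auto
qed

lemma n_block_unique:
  fixes n :: "nat \<Rightarrow> nat"
  assumes mono: "\<forall>k<m. n k < n (Suc k)" and "k < m" "l < m"
    "n k \<le> j" "j < n (Suc k)" "n l \<le> j" "j < n (Suc l)"
  shows "k = l"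
proof (rule ccontr)
  assume "k \<noteq> l"
  then consider "k < l" | "l < k" by linarith
  then show False
  proof cases
    case 1 then have "n (Suc k) \<le> n l" using n_mono_le[OF mono, of "Suc k" l] assms by auto
    then show False using assms by auto
  next
    case 2 then have "n (Suc l) \<le> n k" using n_mono_le[OF mono, of "Suc l" k] assms by auto
    then show False using assms by auto
  qed
qed

lemma block_entry:
  assumes "n k \<le> i" "i < n (Suc k)" "n l \<le> j" "j < n (Suc l)"
  shows "block n M k l $$ (i - n k, j - n l) = M $$ (i,j)"
  using assms by (simp add: block_def)

lemma sum_shift:
  assumes "p \<le> (q::nat)"
  shows "sum f {p..<q} = (\<Sum>c<q-p. f (p + c))"
proof -
  have "sum f {0+p..<(q-p)+p} = (\<Sum>i=0..<q-p. f (i + p))" by (rule sum.shift_bounds_nat_ivl)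
  then show ?thesis using assms by (simp add: atLeast0LessThan add.commute)
qed

lemma reidx2:
  assumes b: "bij_betw \<sigma> {..<d} {..<d}"
  shows "(\<Sum>i<d. \<Sum>j<d. g i j) = (\<Sum>a<d. \<Sum>b<d. g (\<sigma> a) (\<sigma> b))"
proof -
  have "(\<Sum>a<d. \<Sum>b<d. g (\<sigma> a) (\<sigma> b)) = (\<Sum>a<d. \<Sum>j<d. g (\<sigma> a) j)"
    by (intro sum.cong refl sum.reindex_bij_betw[OF b])
  also have "\<dots> = (\<Sum>i<d. \<Sum>j<d. g i j)"
    by (rule sum.reindex_bij_betw[OF b, of "\<lambda>i. \<Sum>j<d. g i j"])
  finally show ?thesis by simp
qed


theorem lemma2:
  fixes A P At Xt :: "real mat" and d m :: nat and n :: "nat \<Rightarrow> nat"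
    and Xb :: "nat \<Rightarrow> real mat"
  assumes A: "A \<in> carrier_mat d d" and A_nonneg: "nonneg_mat A"
    and P: "permutation_mat d P"
    and At_def: "At = P * A * transpose_mat P"
    and m_pos: "0 < m"
    and n0: "n 0 = 0" and nm: "n m = d" and n_mono: "\<forall>k<m. n k < n (Suc k)"
    and At_lower: "\<forall>k<m. \<forall>l<k. block n At k l = 0\<^sub>m (n (Suc k) - n k) (n (Suc l) - n l)"
    and Xb: "\<forall>k<m. closest_stable_nonneg (Xb k) (block n At k k)"
    and Xt: "Xt \<in> carrier_mat d d"
    and Xt_diag: "\<forall>k<m. block n Xt k k = Xb k"
    and Xt_upper: "\<forall>k<m. \<forall>l<m. k < l \<longrightarrow> block n Xt k l = block n At k l"
    and Xt_lower: "\<forall>k<m. \<forall>l<k. block n Xt k l = 0\<^sub>m (n (Suc k) - n k) (n (Suc l) - n l)"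
  shows "closest_stable_nonneg (transpose_mat P * Xt * P) A"
proof -
  obtain \<sigma> where bij: "bij_betw \<sigma> {..<d} {..<d}"
    and Pe: "\<forall>i<d. \<forall>j<d. P$$(i,j) = (if j = \<sigma> i then 1 else 0)"
    using perm_fun[OF P] by blast
  define \<tau> where "\<tau> = inv_into {..<d} \<sigma>"
  have sd: "\<forall>i<d. \<sigma> i < d" using bij bij_betwE by blast
  have td: "\<forall>i<d. \<tau> i < d" using bij_betw_inv_into[OF bij] bij_betwE unfolding \<tau>_def by blast
  have ts: "\<forall>a<d. \<tau> (\<sigma> a) = a" using bij unfolding \<tau>_def
    by (metis bij_betw_inv_into_left lessThan_iff)
  have st: "\<forall>c<d. \<sigma> (\<tau> c) = c" using bij unfolding \<tau>_def
    by (metis bij_betw_inv_into_right lessThan_iff)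
  have Pc: "P \<in> carrier_mat d d" using P unfolding permutation_mat_def by auto
  have At: "At \<in> carrier_mat d d" using At_def Pc A by auto
  have Ate: "\<forall>a<d. \<forall>b<d. At$$(a,b) = A$$(\<sigma> a, \<sigma> b)"
    using perm_conj[OF Pc Pe sd A] At_def by auto
  define Xm where "Xm = transpose_mat P * Xt * P"
  have Xm: "Xm \<in> carrier_mat d d" using Pc Xt unfolding Xm_def by auto
  have Xme: "\<forall>i<d. \<forall>j<d. Xm$$(i,j) = Xt$$(\<tau> i, \<tau> j)"
    using perm_conj_T[OF Pc Pe bij Xt] unfolding Xm_def \<tau>_def by auto
  define s where "s k = n (Suc k) - n k" for k
  have nle: "n k \<le> n l" if "k \<le> l" "l \<le> m" for k l using n_mono_le[OF n_mono that] .
  have nSd: "n (Suc k) \<le> d" if "k < m" for k using nle[of "Suc k" m] that nm by auto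
  have spos: "s k > 0" if "k < m" for k using n_mono that unfolding s_def by auto
  have dpos: "d > 0" using spos[OF m_pos] nSd[OF m_pos] unfolding s_def by auto
  have idx: "n k + a < d" if "k < m" "a < s k" for k a
    using nSd[OF that(1)] that(2) unfolding s_def by linarith
  have blk: "\<forall>j<d. \<exists>k<m. n k \<le> j \<and> j < n (Suc k)"
    using n_block_exists[OF n_mono n0 nm] by blast
  have uniq: "k = l" if "k < m" "l < m" "n k \<le> j" "j < n (Suc k)" "n l \<le> j" "j < n (Suc l)" for k l j
    using n_block_unique[OF n_mono that] .
  have Xbc: "Xb k \<in> carrier_mat (s k) (s k)" "nonneg_mat (Xb k)" "stable (Xb k)"
    and Xbmin: "\<forall>Y\<in>carrier_mat (s k) (s k). nonneg_mat Y \<and> stable Y \<longrightarrow>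
        frob_norm (Xb k - block n At k k) \<le> frob_norm (Y - block n At k k)" if "k < m" for k
    using Xb that unfolding closest_stable_nonneg_def s_def by (auto simp: block_def)
  have low: "Xt$$(i,j) = 0 \<and> At$$(i,j) = 0"
    if "k < m" "l < k" "n k \<le> i" "i < n (Suc k)" "n l \<le> j" "j < n (Suc l)" for k l i j
  proof -
    have "Xt$$(i,j) = block n Xt k l $$ (i - n k, j - n l)"
      using block_entry[OF that(3-6)] by simp
    also have "\<dots> = 0" using Xt_lower that by auto
    moreover have "At$$(i,j) = block n At k l $$ (i - n k, j - n l)"
      using block_entry[OF that(3-6)] by simp
    moreover have "\<dots> = 0" using At_lower that by auto
    ultimately show ?thesis by simp
  qed
  have up: "Xt$$(i,j) = At$$(i,j)"
    if "k < m" "l < m" "k < l" "n k \<le> i" "i < n (Suc k)" "n l \<le> j" "j < n (Suc l)" for k l i j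
  proof -
    have "Xt$$(i,j) = block n Xt k l $$ (i - n k, j - n l)"
      using block_entry[OF that(4-7)] by simp
    also have "\<dots> = block n At k l $$ (i - n k, j - n l)" using Xt_upper that by auto
    also have "\<dots> = At$$(i,j)" using block_entry[OF that(4-7)] by simp
    finally show ?thesis .
  qed
  have dg: "Xt$$(i,j) = Xb k $$ (i - n k, j - n k) \<and> At$$(i,j) = block n At k k $$ (i - n k, j - n k)"
    if "k < m" "n k \<le> i" "i < n (Suc k)" "n k \<le> j" "j < n (Suc k)" for k i j
    using block_entry[OF that(2-5), of Xt] block_entry[OF that(2-5), of At] Xt_diag that(1) by auto
  have Xtnn: "Xt$$(a,b) \<ge> 0" if ab: "a < d" "b < d" for a b
  proof -
    obtain k where k: "k < m" "n k \<le> a" "a < n (Suc k)" using blk ab by blast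
    obtain l where l: "l < m" "n l \<le> b" "b < n (Suc l)" using blk ab by blast
    have Ann: "At$$(a,b) \<ge> 0" using Ate ab sd A_nonneg A unfolding nonneg_mat_def by auto
    consider "l < k" | "k < l" | "k = l" by linarith
    then show ?thesis
    proof cases
      case 1 then show ?thesis using low[OF k(1) 1 k(2,3) l(2,3)] by simp
    next
      case 2 then show ?thesis using up[OF k(1) l(1) 2 k(2,3) l(2,3)] Ann by simp
    next
      case 3
      have "Xt$$(a,b) = Xb k $$ (a - n k, b - n k)" using dg[OF k(1) k(2,3)] l 3 by auto
      also have "\<dots> \<ge> 0" using Xbc(1,2)[OF k(1)] k l 3 unfolding nonneg_mat_def s_def by auto
      finally show ?thesis .
    qed
  qed
  have Xm_nn: "nonneg_mat Xm" unfolding nonneg_mat_def using Xm Xme Xtnn td by auto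
  have Xm_st: "stable Xm"
    unfolding stable_def rho_le_1_iff[OF Xm dpos]
  proof (intro allI impI)
    fix l :: complex and v :: "complex vec"
    assume v: "v \<in> carrier_vec d" and v0: "v \<noteq> 0\<^sub>v d"
      and ev: "\<forall>i<d. (\<Sum>j<d. complex_of_real (Xm$$(i,j)) * v$j) = l * v$i"
    define w where "w = vec d (\<lambda>b. v $ \<sigma> b)"
    have evw: "(\<Sum>b<d. complex_of_real (Xt$$(a,b)) * w$b) = l * w$a" if a: "a < d" for a
    proof -
      have "l * w$a = l * v$(\<sigma> a)" using a unfolding w_def by simp
      also have "\<dots> = (\<Sum>j<d. complex_of_real (Xm$$(\<sigma> a,j)) * v$j)" using ev sd a by auto
      also have "\<dots> = (\<Sum>b<d. complex_of_real (Xm$$(\<sigma> a,\<sigma> b)) * v$(\<sigma> b))"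
        by (rule sum.reindex_bij_betw[OF bij, symmetric])
      also have "\<dots> = (\<Sum>b<d. complex_of_real (Xt$$(a,b)) * w$b)"
        using Xme sd ts a unfolding w_def by (intro sum.cong) auto
      finally show ?thesis by simp
    qed
    obtain c where c: "c < d" "v$c \<noteq> 0" using v0 v by (auto simp: vec_eq_iff)
    define Z where "Z = {b. b < d \<and> w$b \<noteq> 0}"
    have Zne: "\<tau> c \<in> Z" using c td st unfolding Z_def w_def by auto
    have Zfin: "finite Z" unfolding Z_def by auto
    define i0 where "i0 = Max Z"
    have i0Z: "i0 \<in> Z" unfolding i0_def using Zne Zfin Max_in by blast
    have wz: "w$b = 0" if "b < d" "i0 < b" for b
    proof (rule ccontr)
      assume "w$b \<noteq> 0"
      then have "b \<in> Z" using that unfolding Z_def by auto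
      then have "b \<le> i0" unfolding i0_def using Zfin by auto
      with that show False by auto
    qed
    have i0d: "i0 < d" "w$i0 \<noteq> 0" using i0Z unfolding Z_def by auto
    obtain k where k: "k < m" "n k \<le> i0" "i0 < n (Suc k)" using blk i0d by blast
    define u where "u = vec (s k) (\<lambda>a. w$(n k + a))"
    have u: "u \<in> carrier_vec (s k)" unfolding u_def by auto
    have u0: "u \<noteq> 0\<^sub>v (s k)"
    proof
      assume "u = 0\<^sub>v (s k)"
      moreover have "i0 - n k < s k" using k unfolding s_def by auto
      ultimately have "u $ (i0 - n k) = 0" by auto
      then show False using k i0d \<open>i0 - n k < s k\<close> unfolding u_def by auto
    qed
    have evu: "\<forall>a<s k. (\<Sum>c<s k. complex_of_real (Xb k $$ (a,c)) * u$c) = l * u$a"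
    proof (intro allI impI)
      fix a assume a: "a < s k"
      define i where "i = n k + a"
      have i: "n k \<le> i" "i < n (Suc k)" "i < d" using a nSd[OF k(1)] unfolding i_def s_def by auto
      have "l * u$a = l * w$i" using a unfolding u_def i_def by simp
      also have "\<dots> = (\<Sum>b<d. complex_of_real (Xt$$(i,b)) * w$b)" using evw[OF i(3)] by simp
      also have "\<dots> = (\<Sum>b\<in>{n k..<n (Suc k)}. complex_of_real (Xt$$(i,b)) * w$b)"
      proof (rule sum.mono_neutral_right)
        show "finite {..<d}" by auto
        show "{n k..<n (Suc k)} \<subseteq> {..<d}" using nSd[OF k(1)] by auto
        show "\<forall>b\<in>{..<d} - {n k..<n (Suc k)}. complex_of_real (Xt$$(i,b)) * w$b = 0"
        proof
          fix b assume b: "b \<in> {..<d} - {n k..<n (Suc k)}"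
          then have bd: "b < d" by auto
          show "complex_of_real (Xt$$(i,b)) * w$b = 0"
          proof (cases "b < n k")
            case True
            obtain l' where l': "l' < m" "n l' \<le> b" "b < n (Suc l')" using blk bd by blast
            have "l' < k"
            proof (rule ccontr)
              assume "\<not> l' < k"
              then have "n k \<le> n l'" using nle[of k l'] l' by auto
              with True l' show False by auto
            qed
            then have "Xt$$(i,b) = 0" using low[OF k(1) _ i(1,2) l'(2,3)] by auto
            then show ?thesis by simp
          next
            case False
            then have "n (Suc k) \<le> b" using b by auto
            then have "w$b = 0" using wz bd k by auto
            then show ?thesis by simp
          qed
        qed
      qed
      also have "\<dots> = (\<Sum>c<s k. complex_of_real (Xt$$(i, n k + c)) * w$(n k + c))"
        using sum_shift[of "n k" "n (Suc k)"] n_mono k unfolding s_def by (simp add: less_imp_le)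
      also have "\<dots> = (\<Sum>c<s k. complex_of_real (Xb k $$ (a,c)) * u$c)"
      proof (intro sum.cong refl)
        fix c assume c: "c \<in> {..<s k}"
        have cc: "n k \<le> n k + c" "n k + c < n (Suc k)" using c unfolding s_def by auto
        have "Xt$$(i, n k + c) = Xb k $$ (a, c)" using dg[OF k(1) i(1,2) cc] unfolding i_def by simp
        then show "complex_of_real (Xt$$(i, n k + c)) * w$(n k + c) = complex_of_real (Xb k $$ (a,c)) * u$c"
          using c unfolding u_def by simp
      qed
      finally show "(\<Sum>c<s k. complex_of_real (Xb k $$ (a,c)) * u$c) = l * u$a" by simp
    qed
    have "rho (Xb k) \<le> 1" using Xbc(3)[OF k(1)] unfolding stable_def .
    then show "cmod l \<le> 1" using rho_le_1_iff[OF Xbc(1)[OF k(1)] spos[OF k(1)]] u u0 evu by blast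
  qed
  have min: "frob_norm (Xm - A) \<le> frob_norm (Y - A)"
    if Y: "Y \<in> carrier_mat d d" "nonneg_mat Y" "stable Y" for Y
  proof -
    have Yn: "\<forall>i<d. \<forall>j<d. Y$$(i,j) \<ge> 0" using Y unfolding nonneg_mat_def by auto
    define YB where "YB k = mat (s k) (s k) (\<lambda>(a,c). Y$$(\<sigma>(n k + a), \<sigma>(n k + c)))" for k
    have YBc: "YB k \<in> carrier_mat (s k) (s k)" for k unfolding YB_def by auto
    have YBnn: "nonneg_mat (YB k)" if "k < m" for k
      unfolding nonneg_mat_def YB_def using Yn sd idx[OF that] by auto
    have YBst: "stable (YB k)" if k: "k < m" for k
      unfolding stable_def rho_le_1_iff[OF YBc spos[OF k]]
    proof (intro allI impI)
      fix l :: complex and w :: "complex vec"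
      assume w: "w \<in> carrier_vec (s k)" and w0: "w \<noteq> 0\<^sub>v (s k)"
        and ev: "\<forall>i<s k. (\<Sum>j<s k. complex_of_real (YB k $$ (i,j)) * w$j) = l * w$i"
      show "cmod l \<le> 1"
      proof (rule ccontr)
        assume "\<not> cmod l \<le> 1" then have r: "cmod l > 1" by simp
        obtain j0 where j0: "j0 < s k" "w$j0 \<noteq> 0" using w0 w by (auto simp: vec_eq_iff)
        define z where "z = vec d (\<lambda>c. if n k \<le> \<tau> c \<and> \<tau> c < n (Suc k) then cmod (w $ (\<tau> c - n k)) else 0)"
        have z: "z \<in> carrier_vec d" unfolding z_def by simp
        have zn: "\<forall>c<d. z$c \<ge> 0" unfolding z_def by auto
        define a where "a = \<sigma> (n k + j0)"
        have ad: "a < d" using sd idx[OF k j0(1)] unfolding a_def by auto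
        have za: "z$a > 0" using ad ts idx[OF k j0(1)] j0 unfolding z_def a_def s_def by auto
        have ge: "\<forall>c<d. (Y *\<^sub>v z)$c \<ge> cmod l * z$c"
        proof (intro allI impI)
          fix c assume c: "c < d"
          have Yz: "(Y *\<^sub>v z)$c = (\<Sum>e<d. Y$$(c,e) * z$e)" using mv_entry[OF Y(1) z c] .
          have Yz_nn: "(\<Sum>e<d. Y$$(c,e) * z$e) \<ge> 0" using Yn zn c by (intro sum_nonneg) auto
          show "(Y *\<^sub>v z)$c \<ge> cmod l * z$c"
          proof (cases "n k \<le> \<tau> c \<and> \<tau> c < n (Suc k)")
            case False then have "z$c = 0" using c unfolding z_def by auto
            then show ?thesis using Yz Yz_nn by auto
          next
            case True
            define a' where "a' = \<tau> c - n k"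
            have a': "a' < s k" "\<tau> c = n k + a'" "c = \<sigma> (n k + a')"
              using True st c unfolding a'_def s_def by auto
            have "(\<Sum>e<d. Y$$(c,e) * z$e) = (\<Sum>b<d. Y$$(c,\<sigma> b) * z$(\<sigma> b))"
              by (rule sum.reindex_bij_betw[OF bij, symmetric])
            also have "\<dots> = (\<Sum>b\<in>{n k..<n (Suc k)}. Y$$(c,\<sigma> b) * z$(\<sigma> b))"
            proof (rule sum.mono_neutral_right)
              show "finite {..<d}" by auto
              show "{n k..<n (Suc k)} \<subseteq> {..<d}" using nSd[OF k] by auto
              show "\<forall>b\<in>{..<d} - {n k..<n (Suc k)}. Y$$(c,\<sigma> b) * z$(\<sigma> b) = 0"
                using sd ts unfolding z_def by auto
            qed
            also have "\<dots> = (\<Sum>j<s k. Y$$(c,\<sigma> (n k + j)) * z$(\<sigma> (n k + j)))"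
              using sum_shift[of "n k" "n (Suc k)"] n_mono k unfolding s_def by (simp add: less_imp_le)
            also have "\<dots> = (\<Sum>j<s k. YB k $$ (a',j) * cmod (w$j))"
            proof (intro sum.cong refl)
              fix j assume j: "j \<in> {..<s k}"
              then have jd: "n k + j < d" using idx[OF k] by auto
              show "Y$$(c,\<sigma> (n k + j)) * z$(\<sigma> (n k + j)) = YB k $$ (a',j) * cmod (w$j)"
                using j jd sd ts a' unfolding z_def YB_def s_def by auto
            qed
            finally have eq: "(Y *\<^sub>v z)$c = (\<Sum>j<s k. YB k $$ (a',j) * cmod (w$j))" using Yz by simp
            have "cmod l * z$c = cmod (l * w$a')" using True c unfolding z_def a'_def by (simp add: norm_mult)
            also have "\<dots> = cmod (\<Sum>j<s k. complex_of_real (YB k $$ (a',j)) * w$j)" using ev a' by auto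
            also have "\<dots> \<le> (\<Sum>j<s k. cmod (complex_of_real (YB k $$ (a',j)) * w$j))" by (rule norm_sum)
            also have "\<dots> = (\<Sum>j<s k. YB k $$ (a',j) * cmod (w$j))"
            proof (intro sum.cong refl)
              fix j assume "j \<in> {..<s k}"
              then have "YB k $$ (a',j) \<ge> 0" using YBnn[OF k] YBc[of k] a' unfolding nonneg_mat_def by auto
              then show "cmod (complex_of_real (YB k $$ (a',j)) * w$j) = YB k $$ (a',j) * cmod (w$j)"
                by (simp add: norm_mult)
            qed
            finally show ?thesis using eq by simp
          qed
        qed
        have "rho Y \<le> 1" using Y(3) unfolding stable_def .
        then show False using growth_contra[OF Y(1) Y(2) _ z zn ad za r ge] by auto
      qed
    qed
    define F where "F a b = (Xt$$(a,b) - At$$(a,b))^2" for a b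
    define G where "G a b = (Y$$(\<sigma> a,\<sigma> b) - At$$(a,b))^2" for a b
    have fX: "frob_norm (Xm - A) = sqrt (\<Sum>a<d. \<Sum>b<d. F a b)"
    proof -
      have "frob_norm (Xm - A) = sqrt (\<Sum>i<d. \<Sum>j<d. (Xm$$(i,j) - A$$(i,j))^2)"
        unfolding frob_norm_def using Xm A by (intro arg_cong[where f=sqrt] sum.cong refl) auto
      also have "(\<Sum>i<d. \<Sum>j<d. (Xm$$(i,j) - A$$(i,j))^2) = (\<Sum>a<d. \<Sum>b<d. (Xm$$(\<sigma> a,\<sigma> b) - A$$(\<sigma> a,\<sigma> b))^2)"
        by (rule reidx2[OF bij])
      also have "\<dots> = (\<Sum>a<d. \<Sum>b<d. F a b)" unfolding F_def using Xme Ate sd ts by (intro sum.cong refl) auto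
      finally show ?thesis .
    qed
    have fY: "frob_norm (Y - A) = sqrt (\<Sum>a<d. \<Sum>b<d. G a b)"
    proof -
      have "frob_norm (Y - A) = sqrt (\<Sum>i<d. \<Sum>j<d. (Y$$(i,j) - A$$(i,j))^2)"
        unfolding frob_norm_def using Y(1) A by (intro arg_cong[where f=sqrt] sum.cong refl) auto
      also have "(\<Sum>i<d. \<Sum>j<d. (Y$$(i,j) - A$$(i,j))^2) = (\<Sum>a<d. \<Sum>b<d. (Y$$(\<sigma> a,\<sigma> b) - A$$(\<sigma> a,\<sigma> b))^2)"
        by (rule reidx2[OF bij])
      also have "\<dots> = (\<Sum>a<d. \<Sum>b<d. G a b)" unfolding G_def using Ate sd by (intro sum.cong refl) auto
      finally show ?thesis .
    qed
    define Bk where "Bk k = {n k..<n (Suc k)}" for k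
    have bsum: "(\<Sum>p\<in>Bk k \<times> Bk k. (\<lambda>(a,b). H a b) p) = (\<Sum>i<s k. \<Sum>j<s k. H (n k + i) (n k + j))"
      if k: "k < m" for k and H :: "nat \<Rightarrow> nat \<Rightarrow> real"
    proof -
      have le: "n k \<le> n (Suc k)" using n_mono k by (simp add: less_imp_le)
      have "(\<Sum>p\<in>Bk k \<times> Bk k. (\<lambda>(a,b). H a b) p) = (\<Sum>a\<in>Bk k. \<Sum>b\<in>Bk k. H a b)"
        by (rule sum.cartesian_product[symmetric])
      also have "\<dots> = (\<Sum>i<s k. \<Sum>j<s k. H (n k + i) (n k + j))"
        unfolding Bk_def s_def sum_shift[OF le] ..
      finally show ?thesis .
    qed
    have blockle: "(\<Sum>i<s k. \<Sum>j<s k. F (n k + i) (n k + j)) \<le> (\<Sum>i<s k. \<Sum>j<s k. G (n k + i) (n k + j))"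
      if k: "k < m" for k
    proof -
      let ?bA = "block n At k k"
      have bAc: "?bA \<in> carrier_mat (s k) (s k)" unfolding block_def s_def by auto
      have e1: "(\<Sum>i<s k. \<Sum>j<s k. F (n k + i) (n k + j)) =
          (\<Sum>i<dim_row (Xb k - ?bA). \<Sum>j<dim_col (Xb k - ?bA). ((Xb k - ?bA) $$ (i, j))^2)"
      proof -
        have "F (n k + i) (n k + j) = ((Xb k - ?bA) $$ (i, j))^2" if "i < s k" "j < s k" for i j
        proof -
          have cc: "n k \<le> n k + i" "n k + i < n (Suc k)" "n k \<le> n k + j" "n k + j < n (Suc k)"
            using that unfolding s_def by auto
          show ?thesis using dg[OF k cc] that bAc Xbc(1)[OF k] unfolding F_def by auto
        qed
        then show ?thesis using bAc by (auto intro!: sum.cong)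
      qed
      have e2: "(\<Sum>i<s k. \<Sum>j<s k. G (n k + i) (n k + j)) =
          (\<Sum>i<dim_row (YB k - ?bA). \<Sum>j<dim_col (YB k - ?bA). ((YB k - ?bA) $$ (i, j))^2)"
      proof -
        have "G (n k + i) (n k + j) = ((YB k - ?bA) $$ (i, j))^2" if "i < s k" "j < s k" for i j
        proof -
          have cc: "n k \<le> n k + i" "n k + i < n (Suc k)" "n k \<le> n k + j" "n k + j < n (Suc k)"
            using that unfolding s_def by auto
          show ?thesis using dg[OF k cc] that bAc unfolding G_def YB_def by auto
        qed
        then show ?thesis using bAc by (auto intro!: sum.cong)
      qed
      have "frob_norm (Xb k - ?bA) \<le> frob_norm (YB k - ?bA)"
        using Xbmin[OF k] YBc YBnn[OF k] YBst[OF k] by auto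
      then show ?thesis unfolding e1 e2 frob_norm_def real_sqrt_le_iff .
    qed
    have disj: "\<forall>k\<in>{..<m}. \<forall>k'\<in>{..<m}. k \<noteq> k' \<longrightarrow> (Bk k \<times> Bk k) \<inter> (Bk k' \<times> Bk k') = {}"
      unfolding Bk_def using uniq by fastforce
    have Usub: "(\<Union>k\<in>{..<m}. Bk k \<times> Bk k) \<subseteq> {..<d} \<times> {..<d}"
      unfolding Bk_def using nSd by fastforce
    have SF: "(\<Sum>a<d. \<Sum>b<d. F a b) = (\<Sum>k<m. \<Sum>i<s k. \<Sum>j<s k. F (n k + i) (n k + j))"
    proof -
      have "(\<Sum>a<d. \<Sum>b<d. F a b) = (\<Sum>p\<in>{..<d} \<times> {..<d}. (\<lambda>(a,b). F a b) p)"
        by (rule sum.cartesian_product)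
      also have "\<dots> = (\<Sum>p\<in>(\<Union>k\<in>{..<m}. Bk k \<times> Bk k). (\<lambda>(a,b). F a b) p)"
      proof (rule sum.mono_neutral_right[OF _ Usub])
        show "finite ({..<d} \<times> {..<d})" by auto
        show "\<forall>p\<in>{..<d} \<times> {..<d} - (\<Union>k\<in>{..<m}. Bk k \<times> Bk k). (\<lambda>(a,b). F a b) p = 0"
        proof
          fix p assume p: "p \<in> {..<d} \<times> {..<d} - (\<Union>k\<in>{..<m}. Bk k \<times> Bk k)"
          obtain a b where ab: "p = (a,b)" by (cases p)
          have ad: "a < d" "b < d" using p ab by auto
          obtain k where k: "k < m" "n k \<le> a" "a < n (Suc k)" using blk ad by blast
          obtain l where l: "l < m" "n l \<le> b" "b < n (Suc l)" using blk ad by blast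
          have "k \<noteq> l" using p ab k l unfolding Bk_def by auto
          then consider "l < k" | "k < l" by linarith
          then have "F a b = 0"
          proof cases
            case 1 then show ?thesis using low[OF k(1) 1 k(2,3) l(2,3)] unfolding F_def by simp
          next
            case 2 then show ?thesis using up[OF k(1) l(1) 2 k(2,3) l(2,3)] unfolding F_def by simp
          qed
          then show "(\<lambda>(a,b). F a b) p = 0" using ab by simp
        qed
      qed
      also have "\<dots> = (\<Sum>k<m. \<Sum>p\<in>Bk k \<times> Bk k. (\<lambda>(a,b). F a b) p)"
        by (rule sum.UNION_disjoint[OF _ _ disj]) (auto simp: Bk_def)
      also have "\<dots> = (\<Sum>k<m. \<Sum>i<s k. \<Sum>j<s k. F (n k + i) (n k + j))"
        using bsum by (intro sum.cong refl) auto
      finally show ?thesis .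
    qed
    have SG: "(\<Sum>a<d. \<Sum>b<d. G a b) \<ge> (\<Sum>k<m. \<Sum>i<s k. \<Sum>j<s k. G (n k + i) (n k + j))"
    proof -
      have "(\<Sum>k<m. \<Sum>i<s k. \<Sum>j<s k. G (n k + i) (n k + j)) = (\<Sum>k<m. \<Sum>p\<in>Bk k \<times> Bk k. (\<lambda>(a,b). G a b) p)"
        using bsum by (intro sum.cong refl) auto
      also have "\<dots> = (\<Sum>p\<in>(\<Union>k\<in>{..<m}. Bk k \<times> Bk k). (\<lambda>(a,b). G a b) p)"
        by (rule sum.UNION_disjoint[OF _ _ disj, symmetric]) (auto simp: Bk_def)
      also have "\<dots> \<le> (\<Sum>p\<in>{..<d} \<times> {..<d}. (\<lambda>(a,b). G a b) p)"
        by (rule sum_mono2[OF _ Usub]) (auto simp: G_def)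
      also have "\<dots> = (\<Sum>a<d. \<Sum>b<d. G a b)"
        by (rule sum.cartesian_product[symmetric])
      finally show ?thesis .
    qed
    have "(\<Sum>a<d. \<Sum>b<d. F a b) \<le> (\<Sum>a<d. \<Sum>b<d. G a b)"
    proof -
      have "(\<Sum>k<m. \<Sum>i<s k. \<Sum>j<s k. F (n k + i) (n k + j)) \<le> (\<Sum>k<m. \<Sum>i<s k. \<Sum>j<s k. G (n k + i) (n k + j))"
        using blockle by (rule sum_mono) auto
      then show ?thesis using SF SG by linarith
    qed
    then show ?thesis unfolding fX fY by (rule real_sqrt_le_mono)
  qed
  show ?thesis
    unfolding closest_stable_nonneg_def Xm_def[symmetric] using Xm A Xm_nn Xm_st min by auto
qed

end
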